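(* Let $\gamma\in(0,1)$ be a discount factor, $H\ge 1$ a planning horizon, $f$ the true (stochastic) transition map and $f_\phi$ an approximate transition map such that for every state–action pair $(x,u)$ the total variation distance between $f(\cdot\mid x,u)$ and $f_\phi(\cdot\mid x,u)$ is at most $\epsilon_f$. For a state $x_t$ and a control-distribution parameter $\tilde\eta_t$, let $$J(x_t,\tilde\eta_t)=\mathbb{E}_{\mathbf{u}_t\sim\pi_{\tilde\eta_t},\,\mathbf{x}_t\sim f_\phi}\big[C(\mathbf{x}_t,\mathbf{u}_t)\big],\qquad J_r(x_t,\tilde\eta_t)=\mathbb{E}_{\mathbf{u}_t\sim\pi_{\tilde\eta_t},\,\mathbf{x}_t\sim f}\big[C(\mathbf{x}_t,\mathbf{u}_t)\big],$$ where $C(\mathbf{x}_t,\mathbf{u}_t)=\sum_{h=0}^{H-1}\gamma^h c(x_{t,h},u_{t,h})+\gamma^H c_H(x_{t,H})$ with $c=-r$ and terminal cost $c_H(x)=-V_\zeta(x)$. Suppose $|c|\le c_{max}$ and $|V_\zeta|\le V_{max}$. Then $$J(x_t,\tilde\eta_t)-J_r(x_t,\tilde\eta_t)\le 2c_{max}\frac{(H-1)\gamma^{H+1}-H\gamma^H+\gamma}{(1-\gamma)^2}\,\epsilon_f+2\gamma^H V_{max}H\epsilon_f=:R_{f,H}.$$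
   Context: Setting: a Markov decision process with state set $\mathcal{X}\subset\mathbb{R}^n$, action set $\mathcal{U}\subset\mathbb{R}^m$, reward $r:\mathcal{X}\times\mathcal{U}\to\mathbb{R}$. An $H$-step rollout from $x_t$ consists of states $\mathbf{x}_t=(x_{t,0},\dots,x_{t,H})$ with $x_{t,0}=x_t$ and controls $\mathbf{u}_t=(u_{t,0},\dots,u_{t,H-1})$, where $\mathbf{u}_t$ is sampled from a control distribution $\pi_{\tilde\eta_t}$ (parameterized by $\tilde\eta_t=(\tilde\eta_{t,0},\dots,\tilde\eta_{t,H-1})$) and $x_{t,h+1}\sim f_\phi(x_{t,h},u_{t,h})$ (for $J$) or $x_{t,h+1}\sim f(x_{t,h},u_{t,h})$ (for $J_r$). $V_\zeta$ is a value-function estimate used as terminal reward. $c_{max}$ bounds the stage cost and $V_{max}$ bounds the value function. *)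

theory Defs
  imports "HOL-Probability.Probability"
begin

definition tv_dist :: "'a measure \<Rightarrow> 'a measure \<Rightarrow> real" where
  "tv_dist M N = (SUP A \<in> sets M. \<bar>measure M A - measure N A\<bar>)"

text \<open>Expected discounted cost-to-go of an H-step rollout under a fixed control
  sequence u and transition kernel f, with n steps remaining (current step
  index H - n), stage cost c = -r and terminal cost c_H = -V.\<close>
primrec cost_to_go ::
  "real \<Rightarrow> nat \<Rightarrow> ('x \<Rightarrow> 'u \<Rightarrow> 'x measure) \<Rightarrow> ('x \<Rightarrow> 'u \<Rightarrow> real) \<Rightarrow> ('x \<Rightarrow> real)
     \<Rightarrow> (nat \<Rightarrow> 'u) \<Rightarrow> nat \<Rightarrow> 'x \<Rightarrow> real" where
  "cost_to_go \<gamma> H f r V u 0 x = \<gamma> ^ H * (- V x)"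
| "cost_to_go \<gamma> H f r V u (Suc n) x =
     \<gamma> ^ (H - Suc n) * (- r x (u (H - Suc n)))
     + (\<integral>y. cost_to_go \<gamma> H f r V u n y \<partial>(f x (u (H - Suc n))))"

definition exp_cost ::
  "real \<Rightarrow> nat \<Rightarrow> ('x \<Rightarrow> 'u \<Rightarrow> 'x measure) \<Rightarrow> ('x \<Rightarrow> 'u \<Rightarrow> real) \<Rightarrow> ('x \<Rightarrow> real)
     \<Rightarrow> ('p \<Rightarrow> (nat \<Rightarrow> 'u) measure) \<Rightarrow> 'x \<Rightarrow> 'p \<Rightarrow> real" where
  "exp_cost \<gamma> H f r V ctrl x eta = (\<integral>u. cost_to_go \<gamma> H f r V u H x \<partial>(ctrl eta))"

end

theory Submission
  imports Defs
begin


lemma integral_measurable_subprob_algebra2':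
  fixes f :: "'a \<Rightarrow> 'b \<Rightarrow> real"
  assumes f[measurable]: "(\<lambda>(x, y). f x y) \<in> borel_measurable (M \<Otimes>\<^sub>M N)"
  assumes N[measurable]: "L \<in> measurable M (subprob_algebra N)"
  shows "(\<lambda>x. integral\<^sup>L (L x) (f x)) \<in> borel_measurable M"
proof -
  note integral_measurable_subprob_algebra[measurable]
  note measurable_distr2[measurable]
  have "(\<lambda>x. integral\<^sup>L (distr (L x) (M \<Otimes>\<^sub>M N) (\<lambda>y. (x, y))) (\<lambda>(x, y). f x y)) \<in> borel_measurable M"
    by measurable
  then show "(\<lambda>x. integral\<^sup>L (L x) (f x)) \<in> borel_measurable M"
    by (rule measurable_cong[THEN iffD1, rotated])
       (simp add: integral_distr measurable_Pair2' cong: measurable_cong_sets)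
qed

lemma integral_mono_measure_real:
  fixes f :: "'a \<Rightarrow> real"
  assumes "sets A = sets B" "A \<le> B" "finite_measure B" "f \<in> borel_measurable B"
    "\<And>x. x \<in> space B \<Longrightarrow> 0 \<le> f x \<and> f x \<le> K"
  shows "integral\<^sup>L A f \<le> integral\<^sup>L B f"
proof -
  interpret B: finite_measure B by fact
  have sp: "space A = space B" using assms(1) sets_eq_imp_space_eq by blast
  have fA: "f \<in> borel_measurable A" using assms(1,4) measurable_cong_sets by blast
  have "integral\<^sup>L A f = enn2real (\<integral>\<^sup>+ x. ennreal (f x) \<partial>A)"
    by (rule integral_eq_nn_integral[OF fA]) (auto simp: sp assms(5))
  moreover have "integral\<^sup>L B f = enn2real (\<integral>\<^sup>+ x. ennreal (f x) \<partial>B)"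
    by (rule integral_eq_nn_integral[OF assms(4)]) (auto simp: assms(5))
  moreover have "(\<integral>\<^sup>+ x. ennreal (f x) \<partial>A) \<le> (\<integral>\<^sup>+ x. ennreal (f x) \<partial>B)"
    by (rule nn_integral_mono_measure[OF assms(1,2)])
  moreover have "(\<integral>\<^sup>+ x. ennreal (f x) \<partial>B) < \<infinity>"
  proof -
    have ae: "AE x in B. norm (f x) \<le> K" using assms(5) by (intro AE_I2) auto
    have "integrable B f" by (rule B.integrable_const_bound[OF ae assms(4)])
    then show ?thesis using integrableD(2) by (simp add: less_top)
  qed
  ultimately show ?thesis
    by (simp add: enn2real_mono)
qed

lemma decomp_int:
  fixes g :: "'a \<Rightarrow> real"
  assumes R: "prob_space R" and sR: "sets R = sets M" and YM: "Y \<in> sets M"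
    and g[measurable]: "g \<in> borel_measurable M" and bnd: "\<And>x. x \<in> space M \<Longrightarrow> \<bar>g x\<bar> \<le> B"
  shows "(\<integral>x. g x \<partial>R) = b * measure R Y + a * (1 - measure R Y)
     - (\<integral>x. indicator Y x * (b - g x) \<partial>R) + (\<integral>x. indicator (space M - Y) x * (g x - a) \<partial>R)"
proof -
  interpret R: prob_space R by fact
  have spR: "space R = space M" using sR sets_eq_imp_space_eq by blast
  have YR: "Y \<in> sets R" using YM sR by simp
  have ZR: "space M - Y \<in> sets R" using YM sR by auto
  have gR[measurable]: "g \<in> borel_measurable R" using g sR measurable_cong_sets by blast
  have iY: "integrable R (indicator Y :: _ \<Rightarrow> real)" using YR R.emeasure_finite by (intro integrable_real_indicator) (auto simp: less_top[symmetric])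
  have iZ: "integrable R (indicator (space M - Y) :: _ \<Rightarrow> real)" using ZR R.emeasure_finite by (intro integrable_real_indicator) (auto simp: less_top[symmetric])
  have B0: "0 \<le> B" using R.not_empty spR bnd by (metis abs_ge_zero order_trans ex_in_conv)
  have ig: "integrable R g"
    by (rule R.integrable_const_bound[where B=B]) (auto simp: spR bnd intro!: AE_I2)
  have i1: "integrable R (\<lambda>x. indicator Y x * (b - g x))"
  proof (rule R.integrable_const_bound[where B="\<bar>b\<bar>+B"])
    show "AE x in R. norm (indicator Y x * (b - g x)) \<le> \<bar>b\<bar> + B"
    proof (rule AE_I2)
      fix x assume "x \<in> space R"
      then have "\<bar>g x\<bar> \<le> B" using bnd spR by auto
      then show "norm (indicator Y x * (b - g x)) \<le> \<bar>b\<bar> + B" using B0 by (auto simp: indicator_def)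
    qed
  qed (use YR in auto)
  have i2: "integrable R (\<lambda>x. indicator (space M - Y) x * (g x - a))"
  proof (rule R.integrable_const_bound[where B="\<bar>a\<bar>+B"])
    show "AE x in R. norm (indicator (space M - Y) x * (g x - a)) \<le> \<bar>a\<bar> + B"
    proof (rule AE_I2)
      fix x assume "x \<in> space R"
      then have "\<bar>g x\<bar> \<le> B" using bnd spR by auto
      then show "norm (indicator (space M - Y) x * (g x - a)) \<le> \<bar>a\<bar> + B" using B0 by (auto simp: indicator_def)
    qed
  qed (use ZR in auto)
  have "(\<integral>x. g x \<partial>R) = (\<integral>x. b * indicator Y x + a * indicator (space M - Y) x
      - indicator Y x * (b - g x) + indicator (space M - Y) x * (g x - a) \<partial>R)"
    by (intro Bochner_Integration.integral_cong refl) (auto simp: spR indicator_def algebra_simps)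
  also have "\<dots> = b * measure R Y + a * measure R (space M - Y)
     - (\<integral>x. indicator Y x * (b - g x) \<partial>R) + (\<integral>x. indicator (space M - Y) x * (g x - a) \<partial>R)"
    using iY iZ i1 i2 by (simp add: integral_add integral_diff Int_absorb2[OF sets.sets_into_space[OF YR]] Int_absorb2[OF sets.sets_into_space[OF ZR]])
  also have "measure R (space M - Y) = 1 - measure R Y"
    using R.prob_compl[OF YR] spR by simp
  finally show ?thesis .
qed

lemma tv_bound:
  fixes g :: "'a \<Rightarrow> real"
  assumes P: "prob_space P" and Q: "prob_space Q" and sP: "sets P = sets M" and sQ: "sets Q = sets M"
    and g[measurable]: "g \<in> borel_measurable M" and ab: "\<And>x. x \<in> space M \<Longrightarrow> a \<le> g x \<and> g x \<le> b"
  shows "(\<integral>x. g x \<partial>P) - (\<integral>x. g x \<partial>Q) \<le> (b - a) * tv_dist P Q"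
proof -
  interpret P: prob_space P by fact
  interpret Q: prob_space Q by fact
  have spP: "space P = space M" using sP sets_eq_imp_space_eq by blast
  have spQ: "space Q = space M" using sQ sets_eq_imp_space_eq by blast
  have sPQ: "sets Q = sets P" using sP sQ by simp
  obtain Y where Y: "Y \<in> sets P" and Y1: "\<forall>X\<in>sets P. X \<subseteq> Y \<longrightarrow> emeasure Q X \<le> emeasure P X"
    and Y2: "\<forall>X\<in>sets P. X \<inter> Y = {} \<longrightarrow> emeasure P X \<le> emeasure Q X"
    using finite_unsigned_Hahn_decomposition[of P Q] sPQ P.finite_measure_axioms Q.finite_measure_axioms by blast
  define Z where "Z = space M - Y"
  have YM: "Y \<in> sets M" using Y sP by simp
  have ZM: "Z \<in> sets M" unfolding Z_def using YM by auto
  have gP: "g \<in> borel_measurable P" and gQ: "g \<in> borel_measurable Q"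
    using g sP sQ measurable_cong_sets by blast+
  obtain x0 where x0: "x0 \<in> space M" using P.not_empty spP by blast
  have ab': "a \<le> b" using ab[OF x0] by simp
  have bnd: "\<bar>g x\<bar> \<le> \<bar>a\<bar> + \<bar>b\<bar>" if "x \<in> space M" for x using ab[OF that] by auto
  have dens: "(\<integral>x. indicator Y x * (b - g x) \<partial>R) = integral\<^sup>L (density R (indicator Y)) (\<lambda>x. b - g x)"
    if "sets R = sets M" for R
  proof -
    have [measurable]: "g \<in> borel_measurable R" using g that measurable_cong_sets by blast
    have [measurable]: "Y \<in> sets R" using YM that by simp
    show ?thesis using integral_density[of "\<lambda>x. b - g x" R "indicator Y"] by (simp add: ennreal_indicator)
  qed
  have densZ: "(\<integral>x. indicator Z x * (g x - a) \<partial>R) = integral\<^sup>L (density R (indicator Z)) (\<lambda>x. g x - a)"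
    if "sets R = sets M" for R
  proof -
    have [measurable]: "g \<in> borel_measurable R" using g that measurable_cong_sets by blast
    have [measurable]: "Z \<in> sets R" using ZM that by simp
    show ?thesis using integral_density[of "\<lambda>x. g x - a" R "indicator Z"] by (simp add: ennreal_indicator)
  qed
  have fin: "finite_measure (density R (indicator S))" if "prob_space R" "sets R = sets M" "S \<in> sets M" for R S
  proof (rule finite_measureI)
    interpret R: prob_space R by fact
    have "S \<in> sets R" using that by simp
    then have "emeasure (density R (indicator S)) (space (density R (indicator S))) = emeasure R (S \<inter> space R)"
      by (simp add: emeasure_restricted)
    then show "emeasure (density R (indicator S)) (space (density R (indicator S))) \<noteq> \<infinity>"
      by simp
  qed
  have I1: "(\<integral>x. indicator Y x * (b - g x) \<partial>Q) \<le> (\<integral>x. indicator Y x * (b - g x) \<partial>P)"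
    unfolding dens[OF sQ] dens[OF sP]
  proof (rule integral_mono_measure_real[where K="b - a"])
    show "sets (density Q (indicator Y)) = sets (density P (indicator Y))" using sPQ by simp
    show "density Q (indicator Y) \<le> density P (indicator Y)"
      using Y1 Y sPQ by (subst le_measure) (auto simp: emeasure_restricted)
    show "finite_measure (density P (indicator Y))" using fin[OF P sP YM] .
    show "(\<lambda>x. b - g x) \<in> borel_measurable (density P (indicator Y))"
      using g sP by (simp cong: measurable_cong_sets)
    show "0 \<le> b - g x \<and> b - g x \<le> b - a" if "x \<in> space (density P (indicator Y))" for x
      using ab[of x] that spP by auto
  qed
  have I2: "(\<integral>x. indicator Z x * (g x - a) \<partial>P) \<le> (\<integral>x. indicator Z x * (g x - a) \<partial>Q)"
    unfolding densZ[OF sQ] densZ[OF sP]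
  proof (rule integral_mono_measure_real[where K="b - a"])
    show "sets (density P (indicator Z)) = sets (density Q (indicator Z))" using sPQ by simp
    have "Z \<inter> X \<inter> Y = {}" for X unfolding Z_def by auto
    then show "density P (indicator Z) \<le> density Q (indicator Z)"
      using Y2 ZM sP sPQ by (subst le_measure) (auto simp: emeasure_restricted)
    show "finite_measure (density Q (indicator Z))" using fin[OF Q sQ ZM] .
    show "(\<lambda>x. g x - a) \<in> borel_measurable (density Q (indicator Z))"
      using g sQ by (simp cong: measurable_cong_sets)
    show "0 \<le> g x - a \<and> g x - a \<le> b - a" if "x \<in> space (density Q (indicator Z))" for x
      using ab[of x] that spQ by auto
  qed
  note eP = decomp_int[OF P sP YM g bnd, of b a]
  note eQ = decomp_int[OF Q sQ YM g bnd, of b a]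
  have tv: "measure P Y - measure Q Y \<le> tv_dist P Q"
    unfolding tv_dist_def
  proof (rule order_trans[OF abs_ge_self cSUP_upper[OF Y]])
    show "bdd_above ((\<lambda>A. \<bar>measure P A - measure Q A\<bar>) ` sets P)"
      by (rule bdd_aboveI2[where M=1]) (smt (verit) P.prob_le_1 Q.prob_le_1 measure_nonneg)
  qed
  have "(\<integral>x. g x \<partial>P) - (\<integral>x. g x \<partial>Q) \<le> (b - a) * (measure P Y - measure Q Y)"
    using eP eQ I1 I2 unfolding Z_def by (simp add: algebra_simps)
  also have "\<dots> \<le> (b - a) * tv_dist P Q"
    using tv ab' by (intro mult_left_mono) auto
  finally show ?thesis .
qed

lemma int_abs_le:
  fixes h :: "'a \<Rightarrow> real"
  assumes P: "prob_space P" and sP: "sets P = sets M" and h: "h \<in> borel_measurable M"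
    and B: "\<And>x. x \<in> space M \<Longrightarrow> \<bar>h x\<bar> \<le> B"
  shows "integrable P h" "\<bar>\<integral>x. h x \<partial>P\<bar> \<le> B"
proof -
  interpret P: prob_space P by fact
  have spP: "space P = space M" using sP sets_eq_imp_space_eq by blast
  have hP: "h \<in> borel_measurable P" using h sP measurable_cong_sets by blast
  show i: "integrable P h"
    by (rule P.integrable_const_bound[where B=B]) (auto simp: spP B hP intro!: AE_I2)
  have "(\<integral>x. h x \<partial>P) \<le> B"
    by (rule P.integral_le_const[OF i]) (auto intro!: AE_I2 simp: spP dest!: B)
  moreover have "-B \<le> (\<integral>x. h x \<partial>P)"
    by (rule P.integral_ge_const[OF i]) (auto intro!: AE_I2 simp: spP dest!: B)
  ultimately show "\<bar>\<integral>x. h x \<partial>P\<bar> \<le> B" by linarith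
qed

lemma meas_joint:
  fixes F :: "'x \<Rightarrow> 'u \<Rightarrow> 'x measure" and r :: "'x \<Rightarrow> 'u \<Rightarrow> real" and V :: "'x \<Rightarrow> real"
  assumes H: "H \<ge> 1" and F: "case_prod F \<in> MX \<Otimes>\<^sub>M MU \<rightarrow>\<^sub>M prob_algebra MX"
    and r: "case_prod r \<in> borel_measurable (MX \<Otimes>\<^sub>M MU)" and V: "V \<in> borel_measurable MX"
  shows "(\<lambda>p. cost_to_go \<gamma> H F r V (snd p) n (fst p)) \<in> borel_measurable (MX \<Otimes>\<^sub>M PiM {..<H} (\<lambda>_. MU))"
proof (induction n)
  case 0
  show ?case
    by (simp, intro borel_measurable_times borel_measurable_uminus borel_measurable_const
        measurable_compose[OF measurable_fst V])
next
  case (Suc n)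
  define k where "k = H - Suc n"
  have k: "k \<in> {..<H}" using H by (auto simp: k_def)
  have pk: "(\<lambda>p. (fst p, snd p k)) \<in> MX \<Otimes>\<^sub>M PiM {..<H} (\<lambda>_. MU) \<rightarrow>\<^sub>M MX \<Otimes>\<^sub>M MU"
    by (intro measurable_Pair measurable_fst measurable_compose[OF measurable_snd measurable_component_singleton[OF k]])
  have t1: "(\<lambda>p. r (fst p) (snd p k)) \<in> borel_measurable (MX \<Otimes>\<^sub>M PiM {..<H} (\<lambda>_. MU))"
    using measurable_compose[OF pk r] by simp
  have L: "(\<lambda>p. F (fst p) (snd p k)) \<in> MX \<Otimes>\<^sub>M PiM {..<H} (\<lambda>_. MU) \<rightarrow>\<^sub>M subprob_algebra MX"
    using measurable_prob_algebraD[OF measurable_compose[OF pk F]] by simp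
  have G: "(\<lambda>(p, y). cost_to_go \<gamma> H F r V (snd p) n y) \<in> borel_measurable ((MX \<Otimes>\<^sub>M PiM {..<H} (\<lambda>_. MU)) \<Otimes>\<^sub>M MX)"
    using measurable_compose[OF measurable_Pair[OF measurable_snd measurable_compose[OF measurable_fst measurable_snd]] Suc.IH]
    by (simp add: split_beta')
  have t2: "(\<lambda>p. \<integral>y. cost_to_go \<gamma> H F r V (snd p) n y \<partial>F (fst p) (snd p k)) \<in> borel_measurable (MX \<Otimes>\<^sub>M PiM {..<H} (\<lambda>_. MU))"
    by (rule integral_measurable_subprob_algebra2'[where f="\<lambda>p y. cost_to_go \<gamma> H F r V (snd p) n y", OF G L])
  have eq: "(\<lambda>p. cost_to_go \<gamma> H F r V (snd p) (Suc n) (fst p)) = (\<lambda>p. \<gamma> ^ k * (- r (fst p) (snd p k)) + (\<integral>y. cost_to_go \<gamma> H F r V (snd p) n y \<partial>F (fst p) (snd p k)))"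
    by (simp add: k_def)
  show ?case unfolding eq
    by (intro borel_measurable_add borel_measurable_times borel_measurable_uminus borel_measurable_const t1 t2)
qed

lemma bound:
  fixes F :: "'x \<Rightarrow> 'u \<Rightarrow> 'x measure" and r :: "'x \<Rightarrow> 'u \<Rightarrow> real" and V :: "'x \<Rightarrow> real"
  assumes H: "H \<ge> 1" and F: "case_prod F \<in> MX \<Otimes>\<^sub>M MU \<rightarrow>\<^sub>M prob_algebra MX"
    and r: "case_prod r \<in> borel_measurable (MX \<Otimes>\<^sub>M MU)" and V: "V \<in> borel_measurable MX"
    and g: "0 < \<gamma>"
    and cm: "\<And>x u. x \<in> space MX \<Longrightarrow> u \<in> space MU \<Longrightarrow> \<bar>- r x u\<bar> \<le> cmax"
    and Vm: "\<And>x. x \<in> space MX \<Longrightarrow> \<bar>V x\<bar> \<le> Vmax"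
    and u: "u \<in> space (PiM {..<H} (\<lambda>_. MU))"
  shows "x \<in> space MX \<Longrightarrow> \<bar>cost_to_go \<gamma> H F r V u n x\<bar> \<le> cmax * (\<Sum>i<n. \<gamma> ^ (H - Suc i)) + \<gamma> ^ H * Vmax"
proof (induction n arbitrary: x)
  case 0
  then show ?case using Vm[OF 0] g by (simp add: abs_mult mult_left_mono)
next
  case (Suc n)
  define k where "k = H - Suc n"
  have uk: "u k \<in> space MU" using u H by (auto simp: k_def space_PiM PiE_iff)
  have Fx: "F x (u k) \<in> space (prob_algebra MX)"
    using measurable_space[OF F, of "(x, u k)"] Suc.prems uk by (simp add: space_pair_measure)
  then have Pp: "prob_space (F x (u k))" and Ps: "sets (F x (u k)) = sets MX"
    by (auto simp: space_prob_algebra)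
  have m: "(\<lambda>y. cost_to_go \<gamma> H F r V u n y) \<in> borel_measurable MX"
    using measurable_compose[OF measurable_Pair2'[OF u] meas_joint[OF H F r V]] by simp
  have I: "\<bar>\<integral>y. cost_to_go \<gamma> H F r V u n y \<partial>F x (u k)\<bar> \<le> cmax * (\<Sum>i<n. \<gamma> ^ (H - Suc i)) + \<gamma> ^ H * Vmax"
    by (rule int_abs_le(2)[OF Pp Ps m Suc.IH])
  have R: "\<bar>\<gamma> ^ k * (- r x (u k))\<bar> \<le> \<gamma> ^ k * cmax"
    using cm[OF Suc.prems uk] g by (simp add: abs_mult mult_left_mono)
  show ?case using I R by (simp add: k_def algebra_simps) arith
qed

lemma tv_sym: "sets M = sets N \<Longrightarrow> tv_dist M N = tv_dist N M"
  unfolding tv_dist_def by (simp add: abs_minus_commute)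

lemma diff_bound:
  fixes f fp :: "'x \<Rightarrow> 'u \<Rightarrow> 'x measure" and r :: "'x \<Rightarrow> 'u \<Rightarrow> real" and V :: "'x \<Rightarrow> real"
  assumes H: "H \<ge> 1" and F: "case_prod f \<in> MX \<Otimes>\<^sub>M MU \<rightarrow>\<^sub>M prob_algebra MX"
    and Fp: "case_prod fp \<in> MX \<Otimes>\<^sub>M MU \<rightarrow>\<^sub>M prob_algebra MX"
    and tv: "\<And>x u. x \<in> space MX \<Longrightarrow> u \<in> space MU \<Longrightarrow> tv_dist (f x u) (fp x u) \<le> \<epsilon>"
    and r: "case_prod r \<in> borel_measurable (MX \<Otimes>\<^sub>M MU)" and V: "V \<in> borel_measurable MX"
    and g: "0 < \<gamma>"
    and cm: "\<And>x u. x \<in> space MX \<Longrightarrow> u \<in> space MU \<Longrightarrow> \<bar>- r x u\<bar> \<le> cmax"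
    and Vm: "\<And>x. x \<in> space MX \<Longrightarrow> \<bar>V x\<bar> \<le> Vmax"
    and u: "u \<in> space (PiM {..<H} (\<lambda>_. MU))"
  shows "x \<in> space MX \<Longrightarrow> cost_to_go \<gamma> H fp r V u n x - cost_to_go \<gamma> H f r V u n x
     \<le> 2 * \<epsilon> * (cmax * (\<Sum>m<n. \<Sum>i<m. \<gamma> ^ (H - Suc i)) + real n * \<gamma> ^ H * Vmax)"
proof (induction n arbitrary: x)
  case 0
  then show ?case by simp
next
  case (Suc n)
  define k where "k = H - Suc n"
  define Mn where "Mn = cmax * (\<Sum>i<n. \<gamma> ^ (H - Suc i)) + \<gamma> ^ H * Vmax"
  define En where "En = 2 * \<epsilon> * (cmax * (\<Sum>m<n. \<Sum>i<m. \<gamma> ^ (H - Suc i)) + real n * \<gamma> ^ H * Vmax)"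
  have uk: "u k \<in> space MU" using u H by (auto simp: k_def space_PiM PiE_iff)
  have Fx: "f x (u k) \<in> space (prob_algebra MX)"
    using measurable_space[OF F, of "(x, u k)"] Suc.prems uk by (simp add: space_pair_measure)
  then have Pp: "prob_space (f x (u k))" and Ps: "sets (f x (u k)) = sets MX"
    by (auto simp: space_prob_algebra)
  have Fpx: "fp x (u k) \<in> space (prob_algebra MX)"
    using measurable_space[OF Fp, of "(x, u k)"] Suc.prems uk by (simp add: space_pair_measure)
  then have Qp: "prob_space (fp x (u k))" and Qs: "sets (fp x (u k)) = sets MX"
    by (auto simp: space_prob_algebra)
  have m: "(\<lambda>y. cost_to_go \<gamma> H f r V u n y) \<in> borel_measurable MX"
    using measurable_compose[OF measurable_Pair2'[OF u] meas_joint[OF H F r V]] by simp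
  have mp: "(\<lambda>y. cost_to_go \<gamma> H fp r V u n y) \<in> borel_measurable MX"
    using measurable_compose[OF measurable_Pair2'[OF u] meas_joint[OF H Fp r V]] by simp
  have b: "\<bar>cost_to_go \<gamma> H f r V u n y\<bar> \<le> Mn" if "y \<in> space MX" for y
    unfolding Mn_def by (rule bound[OF H F r V g cm Vm u that])
  have bp: "\<bar>cost_to_go \<gamma> H fp r V u n y\<bar> \<le> Mn" if "y \<in> space MX" for y
    unfolding Mn_def by (rule bound[OF H Fp r V g cm Vm u that])
  have Mn0: "0 \<le> Mn" using b[OF Suc.prems] by linarith
  have i1: "integrable (fp x (u k)) (\<lambda>y. cost_to_go \<gamma> H f r V u n y)"
    by (rule int_abs_le(1)[OF Qp Qs m b])
  have i2: "integrable (fp x (u k)) (\<lambda>y. cost_to_go \<gamma> H fp r V u n y)"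
    by (rule int_abs_le(1)[OF Qp Qs mp bp])
  have A: "(\<integral>y. cost_to_go \<gamma> H fp r V u n y - cost_to_go \<gamma> H f r V u n y \<partial>fp x (u k)) \<le> En"
  proof (rule prob_space.integral_le_const[OF Qp])
    show "integrable (fp x (u k)) (\<lambda>y. cost_to_go \<gamma> H fp r V u n y - cost_to_go \<gamma> H f r V u n y)"
      using i1 i2 by simp
    show "AE y in fp x (u k). cost_to_go \<gamma> H fp r V u n y - cost_to_go \<gamma> H f r V u n y \<le> En"
      using Suc.IH sets_eq_imp_space_eq[OF Qs] unfolding En_def by (intro AE_I2) auto
  qed
  have B: "(\<integral>y. cost_to_go \<gamma> H f r V u n y \<partial>fp x (u k)) - (\<integral>y. cost_to_go \<gamma> H f r V u n y \<partial>f x (u k))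
      \<le> (Mn - - Mn) * tv_dist (fp x (u k)) (f x (u k))"
    by (rule tv_bound[OF Qp Pp Qs Ps m]) (auto dest!: b simp: abs_le_iff)
  have tvx: "tv_dist (fp x (u k)) (f x (u k)) \<le> \<epsilon>"
    using tv[OF Suc.prems uk] tv_sym[of "fp x (u k)" "f x (u k)"] Qs Ps by simp
  have B2: "(Mn - - Mn) * tv_dist (fp x (u k)) (f x (u k)) \<le> 2 * Mn * \<epsilon>"
    using mult_left_mono[OF tvx, of "2 * Mn"] Mn0 by simp
  have split: "(\<integral>y. cost_to_go \<gamma> H fp r V u n y \<partial>fp x (u k)) =
     (\<integral>y. cost_to_go \<gamma> H fp r V u n y - cost_to_go \<gamma> H f r V u n y \<partial>fp x (u k)) + (\<integral>y. cost_to_go \<gamma> H f r V u n y \<partial>fp x (u k))"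
    using i1 i2 by (simp add: integral_diff)
  have "cost_to_go \<gamma> H fp r V u (Suc n) x - cost_to_go \<gamma> H f r V u (Suc n) x
     = (\<integral>y. cost_to_go \<gamma> H fp r V u n y \<partial>fp x (u k)) - (\<integral>y. cost_to_go \<gamma> H f r V u n y \<partial>f x (u k))"
    by (simp add: k_def)
  also have "\<dots> \<le> En + 2 * Mn * \<epsilon>" using A B B2 split by linarith
  also have "\<dots> = 2 * \<epsilon> * (cmax * (\<Sum>m<Suc n. \<Sum>i<m. \<gamma> ^ (H - Suc i)) + real (Suc n) * \<gamma> ^ H * Vmax)"
    unfolding En_def Mn_def by (simp add: algebra_simps)
  finally show ?case .
qed

lemma S_closed:
  fixes \<gamma> :: real
  assumes "\<gamma> < 1"
  shows "m \<le> H \<Longrightarrow> (\<Sum>i<m. \<gamma> ^ (H - Suc i)) = (\<gamma> ^ (H - m) - \<gamma> ^ H) / (1 - \<gamma>)"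
proof (induction m)
  case 0 then show ?case by simp
next
  case (Suc m)
  define j where "j = H - Suc m"
  have hm: "H - m = Suc j" using Suc.prems by (simp add: j_def)
  have "(\<Sum>i<Suc m. \<gamma> ^ (H - Suc i)) = (\<gamma> ^ (H - m) - \<gamma> ^ H) / (1 - \<gamma>) + \<gamma> ^ j"
    using Suc by (simp add: j_def)
  also have "\<dots> = (\<gamma> ^ j - \<gamma> ^ H) / (1 - \<gamma>)"
    using assms unfolding hm by (simp add: field_simps)
  finally show ?case by (simp add: j_def)
qed

lemma T_closed:
  fixes \<gamma> :: real
  assumes "\<gamma> < 1"
  shows "(\<Sum>m<H. \<Sum>i<m. \<gamma> ^ (H - Suc i)) = ((real H - 1) * \<gamma> ^ (H + 1) - real H * \<gamma> ^ H + \<gamma>) / (1 - \<gamma>)\<^sup>2"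
proof -
  have "(\<Sum>m<H. \<Sum>i<m. \<gamma> ^ (H - Suc i)) = (\<Sum>m<H. (\<gamma> ^ (H - m) - \<gamma> ^ H) / (1 - \<gamma>))"
    using S_closed[OF assms] by (intro sum.cong) auto
  also have "\<dots> = ((\<Sum>m<H. \<gamma> ^ (H - m)) - real H * \<gamma> ^ H) / (1 - \<gamma>)"
    by (simp add: sum_divide_distrib[symmetric] sum_subtractf)
  also have "(\<Sum>m<H. \<gamma> ^ (H - m)) = (\<Sum>m<H. \<gamma> ^ Suc (H - Suc m))"
    by (intro sum.cong) (auto simp: Suc_diff_Suc)
  also have "\<dots> = (\<Sum>m<H. \<gamma> ^ Suc m)"
    by (rule sum.nat_diff_reindex)
  also have "\<dots> = \<gamma> * (1 - \<gamma> ^ H) / (1 - \<gamma>)"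
    using assms by (simp add: sum_distrib_left[symmetric] sum_gp_strict)
  finally show ?thesis
    using assms by (simp add: field_simps power2_eq_square)
qed

theorem lemma1:
  fixes MX :: "'x measure" and MU :: "'u measure"
    and f f\<^sub>\<phi> :: "'x \<Rightarrow> 'u \<Rightarrow> 'x measure"
    and r :: "'x \<Rightarrow> 'u \<Rightarrow> real" and V :: "'x \<Rightarrow> real"
    and ctrl :: "'p \<Rightarrow> (nat \<Rightarrow> 'u) measure"
    and \<gamma> \<epsilon>\<^sub>f c\<^sub>m\<^sub>a\<^sub>x V\<^sub>m\<^sub>a\<^sub>x :: real and H :: nat
    and x\<^sub>t :: 'x and \<eta> :: 'p
  assumes "0 < \<gamma>" and "\<gamma> < 1" and "H \<ge> 1"
    and "case_prod f \<in> MX \<Otimes>\<^sub>M MU \<rightarrow>\<^sub>M prob_algebra MX"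
    and "case_prod f\<^sub>\<phi> \<in> MX \<Otimes>\<^sub>M MU \<rightarrow>\<^sub>M prob_algebra MX"
    and "\<And>x u. x \<in> space MX \<Longrightarrow> u \<in> space MU \<Longrightarrow> tv_dist (f x u) (f\<^sub>\<phi> x u) \<le> \<epsilon>\<^sub>f"
    and "case_prod r \<in> borel_measurable (MX \<Otimes>\<^sub>M MU)"
    and "V \<in> borel_measurable MX"
    and "\<And>x u. x \<in> space MX \<Longrightarrow> u \<in> space MU \<Longrightarrow> \<bar>- r x u\<bar> \<le> c\<^sub>m\<^sub>a\<^sub>x"
    and "\<And>x. x \<in> space MX \<Longrightarrow> \<bar>V x\<bar> \<le> V\<^sub>m\<^sub>a\<^sub>x"
    and "prob_space (ctrl \<eta>)"
    and "sets (ctrl \<eta>) = sets (PiM {..<H} (\<lambda>_. MU))"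
    and "x\<^sub>t \<in> space MX"
  shows "exp_cost \<gamma> H f\<^sub>\<phi> r V ctrl x\<^sub>t \<eta> - exp_cost \<gamma> H f r V ctrl x\<^sub>t \<eta>
    \<le> 2 * c\<^sub>m\<^sub>a\<^sub>x * (((real H - 1) * \<gamma> ^ (H + 1) - real H * \<gamma> ^ H + \<gamma>) / (1 - \<gamma>)\<^sup>2) * \<epsilon>\<^sub>f
       + 2 * \<gamma> ^ H * V\<^sub>m\<^sub>a\<^sub>x * real H * \<epsilon>\<^sub>f"
proof -
  note tvd = assms(6) and cm = assms(9) and Vm = assms(10)
  interpret C: prob_space "ctrl \<eta>" by fact
  have spC: "space (ctrl \<eta>) = space (PiM {..<H} (\<lambda>_. MU))"
    using assms(12) sets_eq_imp_space_eq by blast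
  define K where "K = c\<^sub>m\<^sub>a\<^sub>x * (\<Sum>i<H. \<gamma> ^ (H - Suc i)) + \<gamma> ^ H * V\<^sub>m\<^sub>a\<^sub>x"
  have mu: "(\<lambda>u. cost_to_go \<gamma> H F r V u H x\<^sub>t) \<in> borel_measurable (PiM {..<H} (\<lambda>_. MU))"
    if "case_prod F \<in> MX \<Otimes>\<^sub>M MU \<rightarrow>\<^sub>M prob_algebra MX" for F
    using measurable_compose[OF measurable_Pair1'[OF assms(13)] meas_joint[OF assms(3) that assms(7) assms(8)]]
    by simp
  have iF: "integrable (ctrl \<eta>) (\<lambda>u. cost_to_go \<gamma> H F r V u H x\<^sub>t)"
    if F: "case_prod F \<in> MX \<Otimes>\<^sub>M MU \<rightarrow>\<^sub>M prob_algebra MX" for F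
    by (rule int_abs_le(1)[OF assms(11) assms(12) mu[OF F], where B=K])
       (unfold K_def, rule bound[OF assms(3) F assms(7) assms(8) assms(1) cm Vm _ assms(13)])
  note i1 = iF[OF assms(4)] and i2 = iF[OF assms(5)]
  have "exp_cost \<gamma> H f\<^sub>\<phi> r V ctrl x\<^sub>t \<eta> - exp_cost \<gamma> H f r V ctrl x\<^sub>t \<eta>
     = (\<integral>u. cost_to_go \<gamma> H f\<^sub>\<phi> r V u H x\<^sub>t - cost_to_go \<gamma> H f r V u H x\<^sub>t \<partial>ctrl \<eta>)"
    unfolding exp_cost_def using i1 i2 by (simp add: integral_diff)
  also have "\<dots> \<le> 2 * \<epsilon>\<^sub>f * (c\<^sub>m\<^sub>a\<^sub>x * (\<Sum>m<H. \<Sum>i<m. \<gamma> ^ (H - Suc i)) + real H * \<gamma> ^ H * V\<^sub>m\<^sub>a\<^sub>x)"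
  proof (rule C.integral_le_const)
    show "integrable (ctrl \<eta>) (\<lambda>u. cost_to_go \<gamma> H f\<^sub>\<phi> r V u H x\<^sub>t - cost_to_go \<gamma> H f r V u H x\<^sub>t)"
      using i1 i2 by simp
    show "AE u in ctrl \<eta>. cost_to_go \<gamma> H f\<^sub>\<phi> r V u H x\<^sub>t - cost_to_go \<gamma> H f r V u H x\<^sub>t
        \<le> 2 * \<epsilon>\<^sub>f * (c\<^sub>m\<^sub>a\<^sub>x * (\<Sum>m<H. \<Sum>i<m. \<gamma> ^ (H - Suc i)) + real H * \<gamma> ^ H * V\<^sub>m\<^sub>a\<^sub>x)"
    proof (rule AE_I2)
      fix u assume "u \<in> space (ctrl \<eta>)"
      then have u: "u \<in> space (PiM {..<H} (\<lambda>_. MU))" using spC by simp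
      show "cost_to_go \<gamma> H f\<^sub>\<phi> r V u H x\<^sub>t - cost_to_go \<gamma> H f r V u H x\<^sub>t
        \<le> 2 * \<epsilon>\<^sub>f * (c\<^sub>m\<^sub>a\<^sub>x * (\<Sum>m<H. \<Sum>i<m. \<gamma> ^ (H - Suc i)) + real H * \<gamma> ^ H * V\<^sub>m\<^sub>a\<^sub>x)"
        by (rule diff_bound[OF assms(3) assms(4) assms(5) tvd assms(7) assms(8) assms(1) cm Vm u assms(13)])
    qed
  qed
  also have "\<dots> = 2 * c\<^sub>m\<^sub>a\<^sub>x * (((real H - 1) * \<gamma> ^ (H + 1) - real H * \<gamma> ^ H + \<gamma>) / (1 - \<gamma>)\<^sup>2) * \<epsilon>\<^sub>f
       + 2 * \<gamma> ^ H * V\<^sub>m\<^sub>a\<^sub>x * real H * \<epsilon>\<^sub>f"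
    unfolding T_closed[OF assms(2)] by (simp add: algebra_simps)
  finally show ?thesis .
qed

end
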